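(* Let $X$ be a Banach space without the alternating Banach-Saks property. Then for every $\varepsilon>0$ there exists a map $f:\mathcal G(\mathbb N)\to X$ which is bi-Lipschitz onto its image with $\mathrm{Lip}(f)\cdot\mathrm{Lip}(f^{-1})<1+\varepsilon$. In particular, $(\mathcal G(\mathbb N),D)$ Lipschitz embeds into $X$.
   Context: $\mathcal G(\mathbb N)$ is the set of finite subsets of $\mathbb N$ with the metric $D(\bar n,\bar m)=|\bar n\,\Delta\,\bar m|$ (cardinality of the symmetric difference). $X$ has the alternating Banach-Saks property if every bounded sequence $(x_n)$ in $X$ has a subsequence $(x_{n_j})$ and signs $\varepsilon_j\in\{-1,1\}$ such that $(\frac1k\sum_{j=1}^k\varepsilon_jx_{n_j})_k$ converges in norm. $\mathrm{Lip}$ denotes the Lipschitz constant. *)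

theory Defs
  imports "HOL-Analysis.Analysis"
begin

definition GN :: "nat set set" where
  "GN = {A. finite A}"

definition Dsym :: "nat set \<Rightarrow> nat set \<Rightarrow> real" where
  "Dsym A B = real (card ((A - B) \<union> (B - A)))"

text \<open>Alternating Banach-Saks property of a (real) Banach space, given by its type.
  Averages are indexed by k = Suc n >= 1.\<close>
definition alternating_banach_saks :: "'a::banach itself \<Rightarrow> bool" where
  "alternating_banach_saks (_::'a itself) \<longleftrightarrow>
     (\<forall>x :: nat \<Rightarrow> 'a. bounded (range x) \<longrightarrow>
        (\<exists>r eps. strict_mono r \<and> (\<forall>j. eps j \<in> {-1, 1::real}) \<and>
           convergent (\<lambda>n. (1 / real (Suc n)) *\<^sub>R (\<Sum>j\<le>n. eps j *\<^sub>R x (r j)))))"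

definition lip_f :: "(nat set \<Rightarrow> 'a::real_normed_vector) \<Rightarrow> real" where
  "lip_f f = (SUP p\<in>{(A,B). A \<in> GN \<and> B \<in> GN \<and> A \<noteq> B}.
                 norm (f (fst p) - f (snd p)) / Dsym (fst p) (snd p))"

definition lip_finv :: "(nat set \<Rightarrow> 'a::real_normed_vector) \<Rightarrow> real" where
  "lip_finv f = (SUP p\<in>{(A,B). A \<in> GN \<and> B \<in> GN \<and> A \<noteq> B}.
                 Dsym (fst p) (snd p) / norm (f (fst p) - f (snd p)))"

definition bi_lipschitz_GN :: "(nat set \<Rightarrow> 'a::real_normed_vector) \<Rightarrow> bool" where
  "bi_lipschitz_GN f \<longleftrightarrow> inj_on f GN \<and>
     (\<exists>L. \<forall>A\<in>GN. \<forall>B\<in>GN. norm (f A - f B) \<le> L * Dsym A B) \<and>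
     (\<exists>L. \<forall>A\<in>GN. \<forall>B\<in>GN. Dsym A B \<le> L * norm (f A - f B))"

end

theory Submission
  imports Defs
begin


lemma sum_signed_diff:
  fixes g :: "nat \<Rightarrow> 'a::real_normed_vector"
  assumes "finite A" "finite B"
  shows "(\<Sum>i\<in>A. g i) - (\<Sum>i\<in>B. g i) = (\<Sum>i\<in>(A-B)\<union>(B-A). (if i\<in>A then 1 else -1) *\<^sub>R g i)"
proof -
  have a: "(\<Sum>i\<in>A. g i) = (\<Sum>i\<in>A-B. g i) + (\<Sum>i\<in>A\<inter>B. g i)"
    using assms by (metis Diff_Diff_Int Diff_subset add.commute sum.subset_diff inf_le1)
  have b: "(\<Sum>i\<in>B. g i) = (\<Sum>i\<in>B-A. g i) + (\<Sum>i\<in>A\<inter>B. g i)"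
    using assms by (metis Diff_Diff_Int Diff_subset add.commute sum.subset_diff inf_le2 Int_commute)
  have c: "(\<Sum>i\<in>(A-B)\<union>(B-A). (if i\<in>A then 1 else -1) *\<^sub>R g i)
     = (\<Sum>i\<in>A-B. (if i\<in>A then 1 else -1) *\<^sub>R g i) + (\<Sum>i\<in>B-A. (if i\<in>A then 1 else -1) *\<^sub>R g i)"
    using assms by (intro sum.union_disjoint) auto
  have d: "(\<Sum>i\<in>A-B. (if i\<in>A then 1 else -1) *\<^sub>R g i) = (\<Sum>i\<in>A-B. g i)"
    by (rule sum.cong) auto
  have e: "(\<Sum>i\<in>B-A. (if i\<in>A then 1 else -1) *\<^sub>R g i) = - (\<Sum>i\<in>B-A. g i)"
    by (simp add: sum_negf[symmetric]) 
  show ?thesis unfolding a b c d e by simp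
qed

lemma norm_sign: "(s::real) \<in> {-1,1} \<Longrightarrow> norm (s *\<^sub>R v) = norm v"
  by auto

lemma core_lower:
  fixes y :: "nat \<Rightarrow> 'a::real_normed_vector" and \<rho> \<tau> :: real
  assumes y1: "\<And>j. norm (y j) \<le> 1"
    and y2: "\<And>G s. finite G \<Longrightarrow> (\<And>j. j\<in>G \<Longrightarrow> card G \<le> j) \<Longrightarrow> (\<And>j. j\<in>G \<Longrightarrow> s j \<in> {-1,1}) \<Longrightarrow> \<rho> * card G \<le> norm (\<Sum>j\<in>G. s j *\<^sub>R y j)"
    and rho: "\<rho> \<ge> 1 - \<tau>" and tau: "\<tau> > 0" and K: "real K * \<tau> \<ge> 1"
    and S: "finite S" and s: "\<And>i. i\<in>S \<Longrightarrow> s i \<in> {-1,1}"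
  shows "(1 - 3*\<tau>) * card S \<le> norm (\<Sum>i\<in>S. s i *\<^sub>R y (K*(i+1)))"
proof -
  define n where "n = card S"
  define d where "d = nat \<lfloor>\<tau> * n\<rfloor>"
  have dle: "real d \<le> \<tau> * n" unfolding d_def using tau by (simp add: n_def)
  have "\<tau> * n \<ge> 0" using tau by simp
  hence dgt: "real d + 1 > \<tau> * n" unfolding d_def
    using floor_correct[of "\<tau> * n"] by linarith
  have Kpos: "K > 0" using K tau by (cases "K = 0") auto
  define S' where "S' = {i\<in>S. d \<le> i}"
  have fS': "finite S'" using S unfolding S'_def by auto
  have sub: "S - S' \<subseteq> {..<d}" unfolding S'_def by auto
  have cdiff: "card (S - S') \<le> d" using card_mono[OF _ sub] by simp
  have S'sub: "S' \<subseteq> S" unfolding S'_def by auto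
  have csplit: "card S' + card (S - S') = n" unfolding n_def
    using card_Diff_subset[OF fS' S'sub] card_mono[OF S S'sub] by simp
  define G where "G = (\<lambda>i. K*(i+1)) ` S'"
  have inj: "inj_on (\<lambda>i. K*(i+1)) S'" using Kpos by (auto simp: inj_on_def)
  have cG: "card G = card S'" unfolding G_def using card_image[OF inj] .
  have fG: "finite G" unfolding G_def using fS' by auto
  have Gbig: "card G \<le> j" if jG: "j \<in> G" for j
  proof -
    obtain i where i: "i \<in> S'" "j = K*(i+1)" using jG unfolding G_def by blast
    have "d \<le> i" using i unfolding S'_def by auto
    have "real K * (real d + 1) \<ge> real K * (\<tau> * n)"
      using dgt by (intro mult_left_mono) auto
    also have "real K * (\<tau> * n) = (real K * \<tau>) * n" by simp
    also have "\<dots> \<ge> 1 * real n" using K by (intro mult_right_mono) auto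
    finally have "real n \<le> real (K * (d+1))" by (simp add: algebra_simps)
    hence "n \<le> K*(d+1)" by linarith
    also have "K*(d+1) \<le> K*(i+1)" using \<open>d \<le> i\<close> by simp
    finally show ?thesis using i cG csplit by linarith
  qed
  define s' where "s' = (\<lambda>j. s (j div K - 1))"
  have s'i: "s' (K*(i+1)) = s i" for i unfolding s'_def using Kpos by simp
  have sG: "s' j \<in> {-1,1}" if jG2: "j \<in> G" for j
  proof -
    obtain i where i: "i \<in> S" "j = K*(i+1)" using jG2 unfolding G_def S'_def by blast
    show ?thesis using s[OF i(1)] s'i[of i] i(2) by simp
  qed
  have eqG: "(\<Sum>j\<in>G. s' j *\<^sub>R y j) = (\<Sum>i\<in>S'. s i *\<^sub>R y (K*(i+1)))"
    unfolding G_def using s'i by (subst sum.reindex[OF inj]) (simp add: algebra_simps)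
  have low1: "\<rho> * card S' \<le> norm (\<Sum>i\<in>S'. s i *\<^sub>R y (K*(i+1)))"
    using y2[of G s', OF fG Gbig sG] eqG cG by simp
  have up2: "norm (\<Sum>i\<in>S-S'. s i *\<^sub>R y (K*(i+1))) \<le> card (S - S')"
  proof -
    have "norm (\<Sum>i\<in>S-S'. s i *\<^sub>R y (K*(i+1))) \<le> (\<Sum>i\<in>S-S'. norm (s i *\<^sub>R y (K*(i+1))))"
      by (rule norm_sum)
    also have "\<dots> \<le> (\<Sum>i\<in>S-S'. 1)"
    proof (rule sum_mono)
      fix i assume "i \<in> S - S'"
      hence "s i \<in> {-1,1}" using s by auto
      thus "norm (s i *\<^sub>R y (K*(i+1))) \<le> 1" using norm_sign y1 by metis
    qed
    finally show ?thesis by simp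
  qed
  have split: "(\<Sum>i\<in>S. s i *\<^sub>R y (K*(i+1))) = (\<Sum>i\<in>S'. s i *\<^sub>R y (K*(i+1))) + (\<Sum>i\<in>S-S'. s i *\<^sub>R y (K*(i+1)))"
    using sum.subset_diff[OF S'sub S] by (simp add: add.commute)
  have "norm (\<Sum>i\<in>S. s i *\<^sub>R y (K*(i+1))) \<ge> \<rho> * card S' - card (S - S')"
    unfolding split using low1 up2 norm_triangle_ineq4[of "(\<Sum>i\<in>S'. s i *\<^sub>R y (K*(i+1)))" "- (\<Sum>i\<in>S-S'. s i *\<^sub>R y (K*(i+1)))"]
    by (smt (verit) norm_minus_cancel norm_triangle_ineq2 diff_minus_eq_add)
  moreover have "\<rho> * card S' \<ge> (1 - \<tau>) * card S'" using rho by (intro mult_right_mono) auto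
  moreover have "real (card S') + card (S-S') = n" using csplit by linarith
  moreover have "real (card (S-S')) \<le> \<tau> * n" using cdiff dle by linarith
  ultimately have h: "norm (\<Sum>i\<in>S. s i *\<^sub>R y (K*(i+1))) \<ge> (1 - \<tau>) * card S' - card (S - S')"
    "real (card S') + card (S-S') = n" "real (card (S-S')) \<le> \<tau> * n" by linarith+
  have e1: "\<tau> * card S' + \<tau> * card (S-S') = \<tau> * n" using h(2) by (metis distrib_left)
  have e2: "\<tau> * card (S-S') \<ge> 0" using tau by simp
  have "(1 - 3*\<tau>) * card S \<le> (1 - \<tau>) * card S' - card (S - S')"
    using h(2,3) e1 e2 unfolding n_def by (simp add: algebra_simps)
  thus ?thesis using h(1) by linarith
qed



lemma embed_lemma:
  fixes y :: "nat \<Rightarrow> 'a::real_normed_vector" and \<rho> \<tau> e :: real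
  assumes y1: "\<And>j. norm (y j) \<le> 1"
    and y2: "\<And>G s. finite G \<Longrightarrow> (\<And>j. j\<in>G \<Longrightarrow> card G \<le> j) \<Longrightarrow> (\<And>j. j\<in>G \<Longrightarrow> s j \<in> {-1,1}) \<Longrightarrow> \<rho> * card G \<le> norm (\<Sum>j\<in>G. s j *\<^sub>R y j)"
    and rho: "\<rho> \<ge> 1 - \<tau>" and tau: "\<tau> > 0" "3*\<tau>*(1+e) < e" and e: "e > 0"
  shows "\<exists>f :: nat set \<Rightarrow> 'a. bi_lipschitz_GN f \<and> lip_f f * lip_finv f < 1 + e"
proof -
  define K where "K = nat \<lceil>1/\<tau>\<rceil>"
  have c0: "\<lceil>1/\<tau>\<rceil> \<ge> 0" using tau(1) by (simp add: order.strict_trans2[of "-1" 0])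
  have "real K = real_of_int \<lceil>1/\<tau>\<rceil>" unfolding K_def using c0 by simp
  hence "real K \<ge> 1/\<tau>" using le_of_int_ceiling[of "1/\<tau>"] by linarith
  hence K: "real K * \<tau> \<ge> 1" using tau by (simp add: divide_le_eq)
  define f where "f = (\<lambda>A. \<Sum>i\<in>A. y (K*(i+1)))"
  define lam where "lam = 1 - 3*\<tau>"
  have lampos: "lam > 0" unfolding lam_def
  proof (rule ccontr)
    assume "\<not> 0 < 1 - 3 * \<tau>"
    hence "3*\<tau> \<ge> 1" by simp
    hence "3*\<tau>*e \<ge> 1*e" using e by (intro mult_right_mono) auto
    thus False using tau by (simp add: algebra_simps)
  qed
  have laminv: "1/lam < 1 + e"
  proof -
    have "1 < (1+e) * lam" unfolding lam_def using tau by (simp add: algebra_simps)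
    thus ?thesis using lampos by (simp add: divide_less_eq)
  qed
  have D: "Dsym A B = card ((A-B)\<union>(B-A))" for A B unfolding Dsym_def by simp
  have diff: "f A - f B = (\<Sum>i\<in>(A-B)\<union>(B-A). (if i\<in>A then 1 else -1) *\<^sub>R y (K*(i+1)))"
    if "A \<in> GN" "B \<in> GN" for A B
    using that unfolding f_def GN_def by (intro sum_signed_diff) auto
  have upper: "norm (f A - f B) \<le> Dsym A B" if "A \<in> GN" "B \<in> GN" for A B
  proof -
    have "norm (f A - f B) \<le> (\<Sum>i\<in>(A-B)\<union>(B-A). norm ((if i\<in>A then 1 else -1) *\<^sub>R y (K*(i+1))))"
      unfolding diff[OF that] by (rule norm_sum)
    also have "\<dots> \<le> (\<Sum>i\<in>(A-B)\<union>(B-A). 1)"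
      using y1 by (intro sum_mono) auto
    finally show ?thesis unfolding D by simp
  qed
  have lower: "lam * Dsym A B \<le> norm (f A - f B)" if "A \<in> GN" "B \<in> GN" for A B
    unfolding diff[OF that] D lam_def
  proof (rule core_lower[OF y1 y2 rho tau(1) K])
    show "finite ((A-B)\<union>(B-A))" using that unfolding GN_def by simp
    show "\<And>i. i \<in> (A-B)\<union>(B-A) \<Longrightarrow> (if i\<in>A then 1 else -1) \<in> {-1, 1::real}" by simp
  qed
  have Dpos: "Dsym A B > 0" if "A \<in> GN" "B \<in> GN" "A \<noteq> B" for A B
  proof -
    have "(A-B)\<union>(B-A) \<noteq> {}" using that(3) by auto
    moreover have "finite ((A-B)\<union>(B-A))" using that unfolding GN_def by auto
    ultimately show ?thesis unfolding D by (simp add: card_gt_0_iff)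
  qed
  define P where "P = {(A,B). A \<in> GN \<and> B \<in> GN \<and> A \<noteq> B}"
  have P0: "({0},{}) \<in> P" unfolding P_def GN_def by auto
  have q1: "norm (f (fst p) - f (snd p)) / Dsym (fst p) (snd p) \<le> 1" if pP: "p \<in> P" for p
  proof -
    obtain A B where p: "p = (A,B)" "A \<in> GN" "B \<in> GN" "A \<noteq> B" using pP unfolding P_def by auto
    have "norm (f A - f B) / Dsym A B \<le> 1" using upper[OF p(2,3)] Dpos[OF p(2-4)] by (simp add: divide_le_eq)
    thus ?thesis using p by simp
  qed
  have q2: "Dsym (fst p) (snd p) / norm (f (fst p) - f (snd p)) \<le> 1/lam" if pP: "p \<in> P" for p
  proof -
    obtain A B where p: "p = (A,B)" "A \<in> GN" "B \<in> GN" "A \<noteq> B" using pP unfolding P_def by auto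
    have l: "lam * Dsym A B \<le> norm (f A - f B)" using lower p by auto
    have "0 < Dsym A B" using Dpos p by auto
    hence np: "norm (f A - f B) > 0" using l lampos by (smt (verit) mult_pos_pos)
    have "Dsym A B / norm (f A - f B) \<le> 1/lam"
      using l np lampos by (simp add: divide_le_eq field_simps mult.commute)
    thus ?thesis using p by simp
  qed
  have q1n: "norm (f (fst p) - f (snd p)) / Dsym (fst p) (snd p) \<ge> 0" for p unfolding Dsym_def by simp
  have q2n: "Dsym (fst p) (snd p) / norm (f (fst p) - f (snd p)) \<ge> 0" for p unfolding Dsym_def by simp
  have bdd1: "bdd_above ((\<lambda>p. norm (f (fst p) - f (snd p)) / Dsym (fst p) (snd p)) ` P)"
    using q1 by (intro bdd_aboveI2) 
  have bdd2: "bdd_above ((\<lambda>p. Dsym (fst p) (snd p) / norm (f (fst p) - f (snd p))) ` P)"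
    using q2 by (intro bdd_aboveI2)
  have L1: "lip_f f \<le> 1" unfolding lip_f_def P_def[symmetric]
    using P0 q1 by (intro cSUP_least) auto
  have L1n: "lip_f f \<ge> 0" unfolding lip_f_def P_def[symmetric]
    using cSUP_upper[OF P0 bdd1] q1n[of "({0},{})"] by linarith
  have L2: "lip_finv f \<le> 1/lam" unfolding lip_finv_def P_def[symmetric]
    using P0 q2 by (intro cSUP_least) auto
  have L2n: "lip_finv f \<ge> 0" unfolding lip_finv_def P_def[symmetric]
    using cSUP_upper[OF P0 bdd2] q2n[of "({0},{})"] by linarith
  have "lip_f f * lip_finv f \<le> 1 * (1/lam)"
    using L1 L1n L2 L2n by (intro mult_mono) auto
  hence prod: "lip_f f * lip_finv f < 1 + e" using laminv by simp
  have inj: "inj_on f GN"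
  proof (rule inj_onI)
    fix A B assume "A \<in> GN" "B \<in> GN" "f A = f B"
    thus "A = B" using lower[of A B] Dpos[of A B] lampos by (smt (verit) mult_pos_pos norm_zero right_minus_eq)
  qed
  have "bi_lipschitz_GN f" unfolding bi_lipschitz_GN_def
  proof (intro conjI inj exI ballI)
    fix A B assume "A \<in> GN" "B \<in> GN"
    thus "norm (f A - f B) \<le> 1 * Dsym A B" using upper by simp
  next
    fix A B assume "A \<in> GN" "B \<in> GN"
    hence "lam * Dsym A B \<le> norm (f A - f B)" using lower by simp
    thus "Dsym A B \<le> (1/lam) * norm (f A - f B)" using lampos by (simp add: field_simps mult.commute)
  qed
  thus ?thesis using prod by blast
qed



primrec bstart :: "(nat \<Rightarrow> nat \<Rightarrow> nat set) \<Rightarrow> (nat \<Rightarrow> nat) \<Rightarrow> nat \<Rightarrow> nat" where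
  "bstart Fc W 0 = W 0"
| "bstart Fc W (Suc t) = max (Suc (Max (Fc t (bstart Fc W t)))) (W (Suc t))"

declare bstart.simps(2)[simp del]

locale blocks =
  fixes Fc :: "nat \<Rightarrow> nat \<Rightarrow> nat set" and W :: "nat \<Rightarrow> nat"
  assumes Fc_sub: "Fc t m \<subseteq> {m..}" and Fc_fin: "finite (Fc t m)" and Fc_ne: "Fc t m \<noteq> {}"
begin

abbreviation "B \<equiv> bstart Fc W"
abbreviation "Bl t \<equiv> Fc t (B t)"

lemma B_W: "W t \<le> B t"
  by (cases t) (auto simp: bstart.simps(2))

lemma Bl_int: "Bl t \<subseteq> {B t..<B (Suc t)}"
proof
  fix i assume i: "i \<in> Bl t"
  have "i \<le> Max (Bl t)" using i Fc_fin by simp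
  moreover have "B t \<le> i" using i Fc_sub by auto
  ultimately show "i \<in> {B t..<B (Suc t)}" by (auto simp: bstart.simps(2))
qed

lemma B_Suc: "B t < B (Suc t)"
proof -
  obtain i where "i \<in> Bl t" using Fc_ne by blast
  thus ?thesis using Bl_int by fastforce
qed

lemma B_smono: "strict_mono B"
  using B_Suc by (simp add: strict_mono_Suc_iff)

lemma B_mono: "s \<le> t \<Longrightarrow> B s \<le> B t"
  using B_smono strict_mono_less_eq by blast

lemma Bl_ge: "i \<in> Bl t \<Longrightarrow> B t \<le> i" using Bl_int[of t] by (meson atLeastLessThan_iff subsetD)

lemma Bl_lt: "i \<in> Bl t \<Longrightarrow> i < B (Suc t)" using Bl_int[of t] by (meson atLeastLessThan_iff subsetD)

lemma Bl_disj: "s \<noteq> t \<Longrightarrow> Bl s \<inter> Bl t = {}"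
proof -
  have *: "Bl s \<inter> Bl t = {}" if "s < t" for s t
  proof -
    have "B (Suc s) \<le> B t" using B_mono that by simp
    thus ?thesis using Bl_int[of s] Bl_int[of t] by fastforce
  qed
  assume "s \<noteq> t"
  thus ?thesis using *[of s t] *[of t s] by (cases "s < t") auto
qed

definition blk :: "nat \<Rightarrow> nat" where "blk i = (LEAST j. i < B (Suc j))"

lemma blk_eq: "i \<in> Bl t \<Longrightarrow> blk i = t"
  unfolding blk_def
proof (rule Least_equality)
  assume i: "i \<in> Bl t"
  thus "i < B (Suc t)" by (rule Bl_lt)
  fix j assume j: "i < B (Suc j)"
  show "t \<le> j"
  proof (rule ccontr)
    assume "\<not> t \<le> j"
    hence "B (Suc j) \<le> B t" using B_mono by simp
    thus False using j Bl_ge[OF i] by simp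
  qed
qed

lemma B_ge_id: "t \<le> B t"
  using B_smono strict_mono_imp_increasing by blast

lemma blk_lt: "i < B (Suc (blk i))"
  unfolding blk_def
proof (rule LeastI)
  show "i < B (Suc i)" using B_ge_id[of "Suc i"] by simp
qed

lemma blk_ge: "W 0 \<le> i \<Longrightarrow> B (blk i) \<le> i"
proof (cases "blk i")
  case 0
  assume "W 0 \<le> i" thus ?thesis using 0 by simp
next
  case (Suc t)
  have "\<not> i < B (Suc t)"
  proof
    assume "i < B (Suc t)"
    hence "blk i \<le> t" unfolding blk_def by (rule Least_le)
    thus False using Suc by simp
  qed
  thus ?thesis using Suc by simp
qed

lemma prefix:
  assumes "W 0 \<le> q"
  shows "(\<Union>s. Bl s) \<inter> {..<q} = (\<Union>s\<in>{..<blk q}. Bl s) \<union> (Bl (blk q) \<inter> {..<q})"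
proof (intro equalityI subsetI)
  fix i assume "i \<in> (\<Union>s. Bl s) \<inter> {..<q}"
  then obtain s where s: "i \<in> Bl s" "i < q" by blast
  have "\<not> blk q < s"
  proof
    assume "blk q < s"
    hence "B (Suc (blk q)) \<le> B s" using B_mono by simp
    thus False using blk_lt[of q] Bl_ge[OF s(1)] s(2) by simp
  qed
  thus "i \<in> (\<Union>s\<in>{..<blk q}. Bl s) \<union> (Bl (blk q) \<inter> {..<q})"
    using s by (cases "s = blk q") auto
next
  fix i assume i: "i \<in> (\<Union>s\<in>{..<blk q}. Bl s) \<union> (Bl (blk q) \<inter> {..<q})"
  show "i \<in> (\<Union>s. Bl s) \<inter> {..<q}"
  proof (cases "i \<in> Bl (blk q) \<inter> {..<q}")
    case True thus ?thesis by blast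
  next
    case False
    then obtain s where s: "s < blk q" "i \<in> Bl s" using i by blast
    have "B (Suc s) \<le> B (blk q)" using B_mono s(1) by simp
    hence "i < q" using Bl_lt[OF s(2)] blk_ge[OF assms] by simp
    thus ?thesis using s by blast
  qed
qed

end



definition good :: "(nat \<Rightarrow> 'a::real_normed_vector) \<Rightarrow> nat \<Rightarrow> real \<Rightarrow> bool" where
  "good x n a \<longleftrightarrow> (\<exists>m. \<forall>F \<epsilon>. F \<subseteq> {m..} \<longrightarrow> card F = n \<longrightarrow> (\<forall>i\<in>F. \<epsilon> i \<in> {-1,1::real}) \<longrightarrow>
      a * n \<le> norm (\<Sum>i\<in>F. \<epsilon> i *\<^sub>R x i))"

lemma good_mono: "good x n b \<Longrightarrow> a \<le> b \<Longrightarrow> good x n a"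
proof -
  assume "good x n b" "a \<le> b"
  then obtain m where m: "\<forall>F \<epsilon>. F \<subseteq> {m..} \<longrightarrow> card F = n \<longrightarrow> (\<forall>i\<in>F. \<epsilon> i \<in> {-1,1::real}) \<longrightarrow>
      b * n \<le> norm (\<Sum>i\<in>F. \<epsilon> i *\<^sub>R x i)" unfolding good_def by (elim conjE exE)
  have "a * n \<le> b * n" using \<open>a \<le> b\<close> by (simp add: mult_right_mono)
  show "good x n a" unfolding good_def
  proof (intro exI[of _ m] allI impI)
    fix F and \<epsilon> :: "nat \<Rightarrow> real" assume "F \<subseteq> {m..}" "card F = n" "\<forall>i\<in>F. \<epsilon> i \<in> {-1,1::real}"
    then have "b*n \<le> norm (\<Sum>i\<in>F. \<epsilon> i *\<^sub>R x i)" using m by simp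
    thus "a*n \<le> norm (\<Sum>i\<in>F. \<epsilon> i *\<^sub>R x i)" using \<open>a*n \<le> b*n\<close> by linarith
  qed
qed

lemma case2:
  fixes x :: "nat \<Rightarrow> 'a::real_normed_vector" and \<tau> c M :: real
  assumes M: "\<And>i. norm (x i) \<le> M" and c: "c > 0" and g: "\<And>n. n \<ge> 1 \<Longrightarrow> good x n c"
    and tau: "\<tau> > 0"
  shows "\<exists>(y::nat \<Rightarrow> 'a) \<rho>. (\<forall>j. norm (y j) \<le> 1) \<and> \<rho> \<ge> 1 - \<tau> \<and>
     (\<forall>G s. finite G \<longrightarrow> (\<forall>j\<in>G. card G \<le> j) \<longrightarrow> (\<forall>j\<in>G. s j \<in> {-1,1}) \<longrightarrow> \<rho> * card G \<le> norm (\<Sum>j\<in>G. s j *\<^sub>R y j))"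
proof -
  define \<Gamma> where "\<Gamma> = {a. \<forall>n\<ge>1. good x n a}"
  have cG: "c \<in> \<Gamma>" unfolding \<Gamma>_def using g by auto
  have bdd: "bdd_above \<Gamma>"
  proof (rule bdd_aboveI)
    fix a assume "a \<in> \<Gamma>"
    hence "good x 1 a" unfolding \<Gamma>_def by auto
    then obtain m where m: "\<forall>F \<epsilon>. F \<subseteq> {m..} \<longrightarrow> card F = 1 \<longrightarrow> (\<forall>i\<in>F. \<epsilon> i \<in> {-1,1::real}) \<longrightarrow>
      a * real 1 \<le> norm (\<Sum>i\<in>F. \<epsilon> i *\<^sub>R x i)" unfolding good_def ..
    have "a * real 1 \<le> norm (\<Sum>i\<in>{m}. (\<lambda>_. 1::real) i *\<^sub>R x i)" using m[rule_format, of "{m}" "\<lambda>_. 1"] by simp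
    thus "a \<le> M" using M[of m] by simp
  qed
  define \<gamma> where "\<gamma> = Sup \<Gamma>"
  have gc: "c \<le> \<gamma>" unfolding \<gamma>_def using cSup_upper[OF cG bdd] .
  hence gpos: "\<gamma> > 0" using c by simp
  define \<eta> where "\<eta> = \<tau> * \<gamma> / 2"
  have eta: "\<eta> > 0" unfolding \<eta>_def using tau gpos by simp
  have "\<gamma> - \<eta> < Sup \<Gamma>" using eta unfolding \<gamma>_def by simp
  then obtain a where a: "a \<in> \<Gamma>" "\<gamma> - \<eta> < a" using less_cSup_iff[of \<Gamma>] cG bdd by blast
  have glow: "good x n (\<gamma> - \<eta>)" if "n \<ge> 1" for n
    using a that unfolding \<Gamma>_def by (auto intro: good_mono)
  have "\<gamma> + \<eta> \<notin> \<Gamma>"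
  proof
    assume "\<gamma> + \<eta> \<in> \<Gamma>"
    hence "\<gamma> + \<eta> \<le> \<gamma>" unfolding \<gamma>_def using cSup_upper bdd by blast
    thus False using eta by simp
  qed
  then obtain p where p: "p \<ge> 1" "\<not> good x p (\<gamma> + \<eta>)" unfolding \<Gamma>_def by auto
  have "\<forall>m. \<exists>F \<epsilon>. F \<subseteq> {m..} \<and> card F = p \<and> (\<forall>i\<in>F. \<epsilon> i \<in> {-1,1::real}) \<and>
      norm (\<Sum>i\<in>F. \<epsilon> i *\<^sub>R x i) < (\<gamma> + \<eta>) * p"
    using p(2) unfolding good_def by (meson not_le)
  hence "\<forall>m. \<exists>FE. fst FE \<subseteq> {m..} \<and> card (fst FE) = p \<and> (\<forall>i\<in>fst FE. snd FE i \<in> {-1,1::real}) \<and>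
      norm (\<Sum>i\<in>fst FE. snd FE i *\<^sub>R x i) < (\<gamma> + \<eta>) * p" by simp
  then obtain FEc where FEc: "\<forall>m. fst (FEc m) \<subseteq> {m..} \<and> card (fst (FEc m)) = p \<and> (\<forall>i\<in>fst (FEc m). snd (FEc m) i \<in> {-1,1::real}) \<and>
      norm (\<Sum>i\<in>fst (FEc m). snd (FEc m) i *\<^sub>R x i) < (\<gamma> + \<eta>) * p" by (rule choice_iff[THEN iffD1, elim_format]) (erule exE, blast) 
  define Fc where "Fc m = fst (FEc m)" for m
  define Ec where "Ec m = snd (FEc m)" for m
  have FE: "Fc m \<subseteq> {m..} \<and> card (Fc m) = p \<and> (\<forall>i\<in>Fc m. Ec m i \<in> {-1,1::real}) \<and>
      norm (\<Sum>i\<in>Fc m. Ec m i *\<^sub>R x i) < (\<gamma> + \<eta>) * p" for m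
    using FEc unfolding Fc_def Ec_def by blast
  have "\<forall>k. \<exists>m. k \<ge> 1 \<longrightarrow> (\<forall>F \<epsilon>. F \<subseteq> {m..} \<longrightarrow> card F = k*p \<longrightarrow> (\<forall>i\<in>F. \<epsilon> i \<in> {-1,1::real}) \<longrightarrow>
      (\<gamma> - \<eta>) * (k*p) \<le> norm (\<Sum>i\<in>F. \<epsilon> i *\<^sub>R x i))"
  proof
    fix k
    show "\<exists>m. k \<ge> 1 \<longrightarrow> (\<forall>F \<epsilon>. F \<subseteq> {m..} \<longrightarrow> card F = k*p \<longrightarrow> (\<forall>i\<in>F. \<epsilon> i \<in> {-1,1::real}) \<longrightarrow>
      (\<gamma> - \<eta>) * (k*p) \<le> norm (\<Sum>i\<in>F. \<epsilon> i *\<^sub>R x i))"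
    proof (cases "k \<ge> 1")
      case True
      hence "k * p \<ge> 1" using p(1) by simp
      thus ?thesis using glow[of "k*p"] unfolding good_def by blast
    qed auto
  qed
  then obtain W where W0: "\<forall>k. k \<ge> 1 \<longrightarrow> (\<forall>F \<epsilon>. F \<subseteq> {W k..} \<longrightarrow> card F = k*p \<longrightarrow> (\<forall>i\<in>F. \<epsilon> i \<in> {-1,1::real}) \<longrightarrow>
      (\<gamma> - \<eta>) * (k*p) \<le> norm (\<Sum>i\<in>F. \<epsilon> i *\<^sub>R x i))" by (rule choice_iff[THEN iffD1, elim_format]) (erule exE, blast)
  have W: "\<And>k F \<epsilon>. k \<ge> 1 \<Longrightarrow> F \<subseteq> {W k..} \<Longrightarrow> card F = k*p \<Longrightarrow> (\<forall>i\<in>F. \<epsilon> i \<in> {-1,1::real}) \<Longrightarrow>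
      (\<gamma> - \<eta>) * (k*p) \<le> norm (\<Sum>i\<in>F. \<epsilon> i *\<^sub>R x i)" using W0 by blast
  have fin: "finite (Fc m)" and ne: "Fc m \<noteq> {}" for m using FE[of m] p(1) by (auto intro: card_ge_0_finite)
  interpret bl: blocks "\<lambda>t m. Fc m" W
    by unfold_locales (use FE fin ne in auto)
  define B where "B = bstart (\<lambda>t m. Fc m) W"
  have Bge: "i \<in> Fc (B t) \<Longrightarrow> B t \<le> i" for i t using bl.Bl_ge[of i t] unfolding B_def by simp
  have Bmono: "s \<le> t \<Longrightarrow> B s \<le> B t" for s t using bl.B_mono unfolding B_def by simp
  have BW: "W t \<le> B t" for t using bl.B_W unfolding B_def by simp
  have Bdisj: "s \<noteq> t \<Longrightarrow> Fc (B s) \<inter> Fc (B t) = {}" for s t using bl.Bl_disj unfolding B_def by simp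
  have blk: "i \<in> Fc (B t) \<Longrightarrow> bl.blk i = t" for i t using bl.blk_eq unfolding B_def by simp
  have gepos: "\<gamma> + \<eta> > 0" using gpos eta by simp
  define C where "C = 1 / ((\<gamma>+\<eta>) * p)"
  have Cpos: "C > 0" unfolding C_def using gepos p(1) by simp
  define y where "y j = C *\<^sub>R (\<Sum>i\<in>Fc (B j). Ec (B j) i *\<^sub>R x i)" for j
  define \<rho> where "\<rho> = (\<gamma>-\<eta>)/(\<gamma>+\<eta>)"
  have "(\<forall>j. norm (y j) \<le> 1) \<and> \<rho> \<ge> 1 - \<tau> \<and>
     (\<forall>G s. finite G \<longrightarrow> (\<forall>j\<in>G. card G \<le> j) \<longrightarrow> (\<forall>j\<in>G. s j \<in> {-1,1}) \<longrightarrow> \<rho> * card G \<le> norm (\<Sum>j\<in>G. s j *\<^sub>R y j))"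
  proof (intro conjI allI impI)
    fix j
    have "norm (y j) = C * norm (\<Sum>i\<in>Fc (B j). Ec (B j) i *\<^sub>R x i)" unfolding y_def using Cpos by simp
    also have "\<dots> \<le> C * ((\<gamma>+\<eta>) * p)" using FE[of "B j"] Cpos by (intro mult_left_mono) auto
    also have "\<dots> = 1" unfolding C_def using gepos p(1) by simp
    finally show "norm (y j) \<le> 1" .
  next
    have "(1 - \<tau>) * (\<gamma> + \<eta>) \<le> \<gamma> - \<eta>"
    proof -
      have "(1 - \<tau>) * (\<gamma> + \<eta>) = \<gamma> - \<eta> - \<tau> * \<eta>" unfolding \<eta>_def by (simp add: field_simps)
      moreover have "\<tau> * \<eta> \<ge> 0" using tau eta by simp
      ultimately show ?thesis by linarith
    qed
    thus "1 - \<tau> \<le> \<rho>" unfolding \<rho>_def using gepos by (simp add: le_divide_eq)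
  next
    fix G and s :: "nat \<Rightarrow> real"
    assume G: "finite G" "\<forall>j\<in>G. card G \<le> j" "\<forall>j\<in>G. s j \<in> {-1,1}"
    show "\<rho> * card G \<le> norm (\<Sum>j\<in>G. s j *\<^sub>R y j)"
    proof (cases "G = {}")
      case True
      thus ?thesis by simp
    next
      case False
      define k where "k = card G"
      have k1: "k \<ge> 1" unfolding k_def using False G(1) by (simp add: Suc_le_eq card_gt_0_iff)
      define \<sigma> where "\<sigma> i = s (bl.blk i) * Ec (B (bl.blk i)) i" for i
      define U where "U = (\<Union>j\<in>G. Fc (B j))"
      have finF: "finite (Fc (B j))" for j using fin .
      have inner: "s j *\<^sub>R y j = C *\<^sub>R (\<Sum>i\<in>Fc (B j). \<sigma> i *\<^sub>R x i)" for j
      proof -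
        have "(\<Sum>i\<in>Fc (B j). \<sigma> i *\<^sub>R x i) = (\<Sum>i\<in>Fc (B j). s j *\<^sub>R (Ec (B j) i *\<^sub>R x i))"
          by (rule sum.cong) (auto simp: \<sigma>_def blk)
        also have "\<dots> = s j *\<^sub>R (\<Sum>i\<in>Fc (B j). Ec (B j) i *\<^sub>R x i)" by (simp add: scaleR_right.sum)
        finally show ?thesis unfolding y_def by simp
      qed
      have eq: "(\<Sum>j\<in>G. s j *\<^sub>R y j) = C *\<^sub>R (\<Sum>i\<in>U. \<sigma> i *\<^sub>R x i)"
      proof -
        have "(\<Sum>j\<in>G. s j *\<^sub>R y j) = C *\<^sub>R (\<Sum>j\<in>G. \<Sum>i\<in>Fc (B j). \<sigma> i *\<^sub>R x i)"
          unfolding inner by (simp add: scaleR_right.sum)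
        also have "(\<Sum>j\<in>G. \<Sum>i\<in>Fc (B j). \<sigma> i *\<^sub>R x i) = (\<Sum>i\<in>U. \<sigma> i *\<^sub>R x i)"
          unfolding U_def using G(1) finF Bdisj by (intro sum.UNION_disjoint[symmetric]) auto
        finally show ?thesis .
      qed
      have cardU: "card U = k * p"
      proof -
        have "card U = (\<Sum>j\<in>G. card (Fc (B j)))"
          unfolding U_def using G(1) finF Bdisj by (intro card_UN_disjoint) auto
        also have "\<dots> = (\<Sum>j\<in>G. p)" using FE by simp
        finally show ?thesis unfolding k_def by simp
      qed
      have Usub: "U \<subseteq> {W k..}"
      proof
        fix i assume "i \<in> U"
        then obtain j where j: "j \<in> G" "i \<in> Fc (B j)" unfolding U_def by blast
        have "k \<le> j" using G(2) j(1) unfolding k_def by simp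
        hence "W k \<le> B j" using BW[of k] Bmono[of k j] by simp
        thus "i \<in> {W k..}" using Bge[OF j(2)] by simp
      qed
      have sig: "\<forall>i\<in>U. \<sigma> i \<in> {-1,1::real}"
      proof
        fix i assume "i \<in> U"
        then obtain j where j: "j \<in> G" "i \<in> Fc (B j)" unfolding U_def by blast
        have "s j \<in> {-1,1}" using G(3) j(1) by simp
        moreover have "Ec (B j) i \<in> {-1,1}" using FE[of "B j"] j(2) by simp
        ultimately show "\<sigma> i \<in> {-1,1}" unfolding \<sigma>_def using blk[OF j(2)] by auto
      qed
      have low: "(\<gamma> - \<eta>) * (k*p) \<le> norm (\<Sum>i\<in>U. \<sigma> i *\<^sub>R x i)"
        using W[OF k1 Usub cardU sig] .
      have "\<rho> * card G = C * ((\<gamma> - \<eta>) * (k*p))"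
      proof -
        have pp: "real p > 0" using p(1) by simp
        have Cp: "C * real p = 1/(\<gamma>+\<eta>)" unfolding C_def using pp gepos by simp
        have "C * ((\<gamma> - \<eta>) * (k*p)) = ((\<gamma> - \<eta>) * k) * (C * real p)"
          by (simp only: of_nat_mult mult_ac)
        also have "\<dots> = \<rho> * k" unfolding Cp \<rho>_def by simp
        finally show ?thesis unfolding k_def by linarith
      qed
      also have "\<dots> \<le> C * norm (\<Sum>i\<in>U. \<sigma> i *\<^sub>R x i)" using low Cpos by (intro mult_left_mono) auto
      also have "\<dots> = norm (\<Sum>j\<in>G. s j *\<^sub>R y j)" unfolding eq using Cpos by simp
      finally show ?thesis .
    qed
  qed
  thus ?thesis by (intro exI, assumption)
qed



lemma sched_lim:
  fixes a lev :: "nat \<Rightarrow> nat" and M N0 \<epsilon> :: real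
  assumes a1: "\<And>t. a t \<ge> 1" and levinf: "\<And>K. \<exists>T. \<forall>t\<ge>T. K \<le> lev t"
    and abound: "\<And>t. real (a t) \<le> N0 + (t+1)/(lev t+1)" and M: "M \<ge> 0" and e: "\<epsilon> > 0"
  shows "\<exists>T. \<forall>t\<ge>T. (\<Sum>s<t. a s/(lev s+1)) + M * a t \<le> \<epsilon> * (\<Sum>s<t. real (a s))"
proof -
  define X where "X t = (\<Sum>s<t. a s/(lev s+1))" for t
  define L where "L t = (\<Sum>s<t. real (a s))" for t
  have Lt: "L t \<ge> t" for t
  proof -
    have "(\<Sum>s<t. (1::real)) \<le> L t" unfolding L_def using a1 by (intro sum_mono) auto
    thus ?thesis by simp
  qed
  obtain K :: nat where K: "real K \<ge> 4*(1+2*M)/\<epsilon>" using real_arch_simple by blast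
  have Kb: "(1+2*M)/(K+1) \<le> \<epsilon>/4"
  proof -
    have "4*(1+2*M) \<le> \<epsilon> * K" using K e by (simp add: divide_le_eq mult.commute)
    also have "\<dots> \<le> \<epsilon> * (K+1)" using e by simp
    finally show ?thesis using e by (simp add: divide_le_eq field_simps)
  qed
  have K1: "1/(K+1) \<le> \<epsilon>/4" using Kb M by (smt (verit) divide_right_mono of_nat_0_le_iff)
  have K2: "2*M/(K+1) \<le> \<epsilon>/4" using Kb M by (smt (verit) divide_right_mono of_nat_0_le_iff)
  obtain T1 where T1: "\<And>t. t \<ge> T1 \<Longrightarrow> K \<le> lev t" using levinf by blast
  have ind: "X t \<le> X T1 + (L t - L T1)/(K+1)" if "T1 \<le> t" for t
    using that
  proof (induction t rule: dec_induct)
    case base thus ?case by simp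
  next
    case (step t)
    have "a t/(lev t+1) \<le> a t/(K+1)" using T1[OF step(1)] by (intro divide_left_mono) auto
    hence "X (Suc t) \<le> X t + a t/(K+1)" unfolding X_def by simp
    also have "\<dots> \<le> X T1 + (L t - L T1)/(K+1) + a t/(K+1)" using step(3) by simp
    also have "\<dots> = X T1 + (L (Suc t) - L T1)/(K+1)"
    proof -
      have LS: "L (Suc t) = L t + a t" unfolding L_def by simp
      show ?thesis unfolding LS by (simp add: add_divide_distrib diff_divide_distrib)
    qed
    finally show ?case .
  qed
  define T where "T = max (max T1 1) (nat \<lceil>2*(X T1 + M*N0)/\<epsilon>\<rceil>)"
  show ?thesis
  proof (intro exI[of _ T] allI impI)
    fix t assume tT: "T \<le> t"
    have t1: "T1 \<le> t" "1 \<le> t" using tT unfolding T_def by auto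
    have tc: "real t \<ge> 2*(X T1 + M*N0)/\<epsilon>"
    proof -
      have "nat \<lceil>2*(X T1 + M*N0)/\<epsilon>\<rceil> \<le> t" using tT unfolding T_def by auto
      thus ?thesis by linarith
    qed
    hence tc2: "X T1 + M*N0 \<le> (\<epsilon>/2) * t" using e by (simp add: divide_le_eq mult.commute)
    have LT1: "L T1 \<ge> 0" unfolding L_def by (simp add: sum_nonneg)
    have X: "X t \<le> X T1 + (\<epsilon>/4) * L t"
    proof -
      have "(L t - L T1)/(K+1) \<le> L t/(K+1)" using LT1 by (intro divide_right_mono) auto
      also have "\<dots> = L t * (1/(K+1))" by simp
      also have "\<dots> \<le> L t * (\<epsilon>/4)" using K1 Lt[of t] by (intro mult_left_mono) auto
      finally have "(L t - L T1)/(K+1) \<le> (\<epsilon>/4) * L t" by (simp only: mult.commute)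
      thus ?thesis using ind[OF t1(1)] by linarith
    qed
    have A: "M * a t \<le> M*N0 + (\<epsilon>/4) * t"
    proof -
      have "(t+1)/(lev t+1) \<le> (t+1)/(K+1)" using T1[OF t1(1)] by (intro divide_left_mono) auto
      hence "real (a t) \<le> N0 + (t+1)/(K+1)" using abound[of t] by (simp add: add.commute)
      hence "M * a t \<le> M * (N0 + (t+1)/(K+1))" using M by (intro mult_left_mono) auto
      also have "\<dots> = M*N0 + M*(t+1)/(K+1)" by (simp add: algebra_simps)
      also have "M*(t+1)/(K+1) \<le> M*(2*t)/(K+1)" using M t1(2) by (intro divide_right_mono mult_left_mono) auto
      also have "M*(2*t)/(K+1) = (2*M/(K+1)) * t" by simp
      also have "\<dots> \<le> (\<epsilon>/4) * t" using K2 by (intro mult_right_mono) auto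
      finally show ?thesis by simp
    qed
    have "X t + M * a t \<le> (X T1 + M*N0) + (\<epsilon>/4) * L t + (\<epsilon>/4) * t" using X A by simp
    also have "\<dots> \<le> (\<epsilon>/2) * t + (\<epsilon>/4) * L t + (\<epsilon>/4) * t" using tc2 by simp
    also have "\<dots> \<le> \<epsilon> * L t" 
    proof -
      have "\<epsilon> * t \<le> \<epsilon> * L t" using Lt[of t] e by (intro mult_left_mono) auto
      thus ?thesis by (simp add: algebra_simps)
    qed
    finally show "(\<Sum>s<t. a s/(lev s+1)) + M * a t \<le> \<epsilon> * (\<Sum>s<t. real (a s))" unfolding X_def L_def .
  qed
qed



lemma sched_exists:
  fixes N :: "nat \<Rightarrow> nat"
  shows "\<exists>lev::nat\<Rightarrow>nat. (\<forall>K. \<exists>T. \<forall>t\<ge>T. K \<le> lev t) \<and> (\<forall>t. real (N (lev t)) \<le> N 0 + (t+1)/(lev t+1))"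
proof -
  define Nmax where "Nmax k = Max (N ` {..k})" for k
  have NN: "N k \<le> Nmax k" for k unfolding Nmax_def by (rule Max_ge) auto
  define P where "P t k \<longleftrightarrow> k \<le> t \<and> (k = 0 \<or> (k+1) * Nmax k \<le> t+1)" for t k
  define lev where "lev t = (GREATEST k. P t k)" for t
  have Plev: "P t (lev t)" for t unfolding lev_def
    by (rule GreatestI_nat[of _ 0 t]) (auto simp: P_def)
  have Pge: "P t k \<Longrightarrow> k \<le> lev t" for t k unfolding lev_def
    by (rule Greatest_le_nat[of _ _ t]) (auto simp: P_def)
  show ?thesis
  proof (intro exI[of _ lev] conjI allI)
    fix K
    show "\<exists>T. \<forall>t\<ge>T. K \<le> lev t"
    proof (intro exI[of _ "K + (K+1) * Nmax K"] allI impI)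
      fix t assume "K + (K+1) * Nmax K \<le> t"
      hence "P t K" unfolding P_def by auto
      thus "K \<le> lev t" by (rule Pge)
    qed
  next
    fix t
    show "real (N (lev t)) \<le> N 0 + (t+1)/(lev t+1)"
    proof (cases "lev t = 0")
      case True thus ?thesis by simp
    next
      case False
      hence "(lev t + 1) * Nmax (lev t) \<le> t+1" using Plev[of t] unfolding P_def by auto
      hence "(lev t + 1) * N (lev t) \<le> t+1" using NN[of "lev t"]
        by (meson le_trans mult_le_mono2)
      hence "real (lev t + 1) * real (N (lev t)) \<le> real (t+1)" by (metis of_nat_le_iff of_nat_mult)
      hence "real (N (lev t)) \<le> (t+1)/(lev t+1)" by (simp add: le_divide_eq mult.commute)
      thus ?thesis by (simp add: add_ac)
    qed
  qed
qed

lemma case1: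
  fixes x :: "nat \<Rightarrow> 'a::real_normed_vector" and M :: real
  assumes M: "\<And>i. norm (x i) \<le> M" and H: "\<And>c. c > 0 \<Longrightarrow> \<exists>n\<ge>1. \<not> good x n c"
  shows "\<exists>r eps. strict_mono r \<and> (\<forall>j. eps j \<in> {-1, 1::real}) \<and>
           convergent (\<lambda>n. (1 / real (Suc n)) *\<^sub>R (\<Sum>j\<le>n. eps j *\<^sub>R x (r j)))"
proof -
  have M0: "M \<ge> 0" using M[of 0] norm_ge_zero[of "x 0"] by linarith
  have "\<forall>k. \<exists>n. n \<ge> 1 \<and> \<not> good x n (1/(real k+1))"
  proof
    fix k :: nat
    have "1/(real k+1) > 0" by simp
    thus "\<exists>n. n \<ge> 1 \<and> \<not> good x n (1/(real k+1))" using H by blast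
  qed
  then obtain N where N: "\<And>k. N k \<ge> 1" "\<And>k. \<not> good x (N k) (1/(real k+1))" by metis
  have "\<forall>k m. \<exists>F \<epsilon>. F \<subseteq> {m..} \<and> card F = N k \<and> (\<forall>i\<in>F. \<epsilon> i \<in> {-1,1::real}) \<and>
      norm (\<Sum>i\<in>F. \<epsilon> i *\<^sub>R x i) < (1/(real k+1)) * N k"
    using N(2) unfolding good_def by (meson not_le)
  hence "\<forall>k. \<forall>m. \<exists>FE. fst FE \<subseteq> {m..} \<and> card (fst FE) = N k \<and> (\<forall>i\<in>fst FE. snd FE i \<in> {-1,1::real}) \<and>
      norm (\<Sum>i\<in>fst FE. snd FE i *\<^sub>R x i) < (1/(real k+1)) * N k" by simp
  hence "\<forall>k. \<exists>g. \<forall>m. fst (g m) \<subseteq> {m..} \<and> card (fst (g m)) = N k \<and> (\<forall>i\<in>fst (g m). snd (g m) i \<in> {-1,1::real}) \<and>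
      norm (\<Sum>i\<in>fst (g m). snd (g m) i *\<^sub>R x i) < (1/(real k+1)) * N k" by (intro allI choice) blast
  then obtain FEc where FEc: "\<forall>k. \<forall>m. fst (FEc k m) \<subseteq> {m..} \<and> card (fst (FEc k m)) = N k \<and> (\<forall>i\<in>fst (FEc k m). snd (FEc k m) i \<in> {-1,1::real}) \<and>
      norm (\<Sum>i\<in>fst (FEc k m). snd (FEc k m) i *\<^sub>R x i) < (1/(real k+1)) * N k"
    by (rule choice_iff[THEN iffD1, elim_format]) (erule exE, blast)
  obtain lev where lev: "\<And>K. \<exists>T. \<forall>t\<ge>T. K \<le> lev t" "\<And>t::nat. real (N (lev t)) \<le> real (N 0) + (real t + 1) / real (lev t + 1)"
    using sched_exists[of N] by blast
  define Fc where "Fc t m = fst (FEc (lev t) m)" for t m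
  define Ec where "Ec t m = snd (FEc (lev t) m)" for t m
  define a where "a t = N (lev t)" for t
  have FE: "Fc t m \<subseteq> {m..}" "card (Fc t m) = a t" "\<forall>i\<in>Fc t m. Ec t m i \<in> {-1,1::real}"
      "norm (\<Sum>i\<in>Fc t m. Ec t m i *\<^sub>R x i) < real (a t) / (real (lev t) + 1)" for t m
    using FEc unfolding Fc_def Ec_def a_def by auto
  have a1: "a t \<ge> 1" for t unfolding a_def using N(1) .
  have fin: "finite (Fc t m)" and ne: "Fc t m \<noteq> {}" for t m using FE(2)[of t m] a1[of t] by (auto intro: card_ge_0_finite)
  interpret bl: blocks Fc "\<lambda>_. 0"
    by unfold_locales (use FE fin ne in auto)
  define B where "B = bstart Fc (\<lambda>_. 0)"
  have Bge: "i \<in> Fc t (B t) \<Longrightarrow> B t \<le> i" for i t using bl.Bl_ge[of i t] unfolding B_def by simp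
  have Bmono: "s \<le> t \<Longrightarrow> B s \<le> B t" for s t using bl.B_mono unfolding B_def by simp
  have Bid: "t \<le> B t" for t using bl.B_ge_id unfolding B_def by simp
  have Bdisj: "s \<noteq> t \<Longrightarrow> Fc s (B s) \<inter> Fc t (B t) = {}" for s t using bl.Bl_disj unfolding B_def by simp
  have blk: "i \<in> Fc t (B t) \<Longrightarrow> bl.blk i = t" for i t using bl.blk_eq unfolding B_def by simp
  define U where "U = (\<Union>s. Fc s (B s))"
  have prefix: "U \<inter> {..<q} = (\<Union>s\<in>{..<bl.blk q}. Fc s (B s)) \<union> (Fc (bl.blk q) (B (bl.blk q)) \<inter> {..<q})" for q
    using bl.prefix[of q] unfolding B_def U_def by simp
  have Uinf: "infinite U" unfolding infinite_nat_iff_unbounded_le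
  proof
    fix m
    obtain i where i: "i \<in> Fc m (B m)" using ne by blast
    have "m \<le> i" using Bge[OF i] Bid[of m] by simp
    thus "\<exists>n\<ge>m. n \<in> U" using i unfolding U_def by blast
  qed
  define \<sigma> where "\<sigma> i = Ec (bl.blk i) (B (bl.blk i)) i" for i
  have sig: "\<sigma> i \<in> {-1,1}" if iU: "i \<in> U" for i
  proof -
    obtain t where t: "i \<in> Fc t (B t)" using iU unfolding U_def by blast
    show ?thesis unfolding \<sigma>_def blk[OF t] using FE(3)[of t "B t"] t by blast
  qed
  define r where "r = enumerate U"
  define eps where "eps j = \<sigma> (r j)" for j
  have rsm: "strict_mono r" unfolding r_def using strict_mono_enumerate[OF Uinf] .
  have rU: "r j \<in> U" for j unfolding r_def using enumerate_in_set[OF Uinf] .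
  have rinv: "\<exists>j. r j = i" if iU: "i \<in> U" for i unfolding r_def using enumerate_Ex[OF Uinf iU] .
  define S where "S q = (\<Sum>i\<in>U \<inter> {..<q}. \<sigma> i *\<^sub>R x i)" for q
  have img: "r ` {..n} = U \<inter> {..<r (Suc n)}" for n
  proof (intro equalityI subsetI)
    fix i assume "i \<in> r ` {..n}"
    then obtain j where "j \<le> n" "i = r j" by auto
    thus "i \<in> U \<inter> {..<r (Suc n)}" using rU rsm by (auto simp: strict_mono_less)
  next
    fix i assume i: "i \<in> U \<inter> {..<r (Suc n)}"
    then obtain j where j: "r j = i" using rinv by blast
    hence "j < Suc n" using i rsm by (auto simp: strict_mono_less)
    thus "i \<in> r ` {..n}" using j by auto
  qed
  have injr: "inj_on r A" for A using rsm strict_mono_imp_inj_on by blast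
  have avg: "(\<Sum>j\<le>n. eps j *\<^sub>R x (r j)) = S (r (Suc n))" for n
    unfolding S_def img[symmetric] eps_def by (simp add: sum.reindex[OF injr])
  have cardn: "card (U \<inter> {..<r (Suc n)}) = Suc n" for n
    unfolding img[symmetric] using card_image[OF injr] by simp
  define Ls where "Ls t = (\<Sum>s<t. a s)" for t
  have decomp: "norm (S q) \<le> (\<Sum>s<bl.blk q. real (a s) / (real (lev s) + 1)) + M * a (bl.blk q) \<and>
     Ls (bl.blk q) \<le> card (U \<inter> {..<q}) \<and> card (U \<inter> {..<q}) \<le> Ls (Suc (bl.blk q))" for q
  proof -
    define t where "t = bl.blk q"
    define P where "P = (\<Union>s\<in>{..<t}. Fc s (B s))"
    define Q where "Q = Fc t (B t) \<inter> {..<q}"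
    have UPQ: "U \<inter> {..<q} = P \<union> Q" unfolding P_def Q_def t_def using prefix .
    have finP: "finite P" unfolding P_def using fin by auto
    have finQ: "finite Q" unfolding Q_def using fin by auto
    have disj: "P \<inter> Q = {}"
    proof (rule ccontr)
      assume "P \<inter> Q \<noteq> {}"
      then obtain i where "i \<in> P" "i \<in> Q" by blast
      then obtain s where s: "s < t" "i \<in> Fc s (B s)" "i \<in> Fc t (B t)" unfolding P_def Q_def by blast
      have "s \<noteq> t" using s(1) by simp
      thus False using Bdisj[of s t] s(2,3) by blast
    qed
    have QU: "Q \<subseteq> U" unfolding Q_def U_def by blast
    have sumP: "(\<Sum>i\<in>P. \<sigma> i *\<^sub>R x i) = (\<Sum>s<t. \<Sum>i\<in>Fc s (B s). Ec s (B s) i *\<^sub>R x i)"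
    proof -
      have "(\<Sum>i\<in>P. \<sigma> i *\<^sub>R x i) = (\<Sum>s<t. \<Sum>i\<in>Fc s (B s). \<sigma> i *\<^sub>R x i)"
        unfolding P_def using fin Bdisj by (intro sum.UNION_disjoint) auto
      also have "\<dots> = (\<Sum>s<t. \<Sum>i\<in>Fc s (B s). Ec s (B s) i *\<^sub>R x i)"
        by (intro sum.cong refl) (simp add: \<sigma>_def blk)
      finally show ?thesis .
    qed
    have nP: "norm (\<Sum>i\<in>P. \<sigma> i *\<^sub>R x i) \<le> (\<Sum>s<t. real (a s) / (real (lev s) + 1))"
      unfolding sumP
      by (rule order.trans[OF norm_sum sum_mono]) (use FE(4) in \<open>auto intro: less_imp_le\<close>)
    have nQ: "norm (\<Sum>i\<in>Q. \<sigma> i *\<^sub>R x i) \<le> M * a t"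
    proof -
      have "norm (\<Sum>i\<in>Q. \<sigma> i *\<^sub>R x i) \<le> (\<Sum>i\<in>Q. norm (\<sigma> i *\<^sub>R x i))" by (rule norm_sum)
      also have "\<dots> \<le> (\<Sum>i\<in>Q. M)"
      proof (rule sum_mono)
        fix i assume "i \<in> Q"
        hence "\<sigma> i \<in> {-1,1}" using sig QU by blast
        thus "norm (\<sigma> i *\<^sub>R x i) \<le> M" using norm_sign M by metis
      qed
      also have "\<dots> = M * card Q" by simp
      also have "\<dots> \<le> M * a t"
      proof -
        have "card Q \<le> card (Fc t (B t))" unfolding Q_def using fin by (intro card_mono) auto
        thus ?thesis using FE(2)[of t "B t"] M0 by (intro mult_left_mono) auto
      qed
      finally show ?thesis .
    qed
    have "S q = (\<Sum>i\<in>P. \<sigma> i *\<^sub>R x i) + (\<Sum>i\<in>Q. \<sigma> i *\<^sub>R x i)"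
      unfolding S_def UPQ using finP finQ disj by (rule sum.union_disjoint)
    hence n1: "norm (S q) \<le> (\<Sum>s<t. real (a s) / (real (lev s) + 1)) + M * a t"
      using nP nQ norm_triangle_ineq[of "(\<Sum>i\<in>P. \<sigma> i *\<^sub>R x i)" "(\<Sum>i\<in>Q. \<sigma> i *\<^sub>R x i)"] by simp
    have cP: "card P = Ls t" unfolding P_def Ls_def
      using fin Bdisj by (subst card_UN_disjoint) (auto simp: FE(2))
    have cQ: "card Q \<le> a t" unfolding Q_def using fin FE(2)[of t "B t"] by (metis card_mono inf_le1)
    have cPQ: "card (U \<inter> {..<q}) = card P + card Q" unfolding UPQ using finP finQ disj by (rule card_Un_disjoint)
    have "Ls (Suc t) = Ls t + a t" unfolding Ls_def by simp
    thus ?thesis using n1 cP cQ cPQ unfolding t_def by simp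
  qed
  have Lsmono: "s \<le> t \<Longrightarrow> Ls s \<le> Ls t" for s t unfolding Ls_def by (rule sum_mono2) auto
  have lim: "(\<lambda>n. (1 / real (Suc n)) *\<^sub>R (\<Sum>j\<le>n. eps j *\<^sub>R x (r j))) \<longlonglongrightarrow> 0"
  proof (rule LIMSEQ_I)
    fix \<epsilon> :: real assume e: "\<epsilon> > 0"
    have abound: "real (a t) \<le> real (N 0) + (real t + 1) / real (lev t + 1)" for t
      unfolding a_def by (rule lev(2))
    obtain T0 where T0: "\<forall>t\<ge>T0. (\<Sum>s<t. real (a s) / real (lev s + 1)) + M * a t \<le> (\<epsilon>/2) * (\<Sum>s<t. real (a s))"
      using sched_lim[of a lev "real (N 0)" M "\<epsilon>/2", OF a1 lev(1) _ M0] abound e by auto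
    define T where "T = max T0 1"
    show "\<exists>no. \<forall>n\<ge>no. norm ((1 / real (Suc n)) *\<^sub>R (\<Sum>j\<le>n. eps j *\<^sub>R x (r j)) - 0) < \<epsilon>"
    proof (intro exI[of _ "Ls T"] allI impI)
      fix n assume n: "Ls T \<le> n"
      define q where "q = r (Suc n)"
      define t where "t = bl.blk q"
      have dq: "norm (S q) \<le> (\<Sum>s<t. real (a s) / (real (lev s) + 1)) + M * a t"
        "Ls t \<le> Suc n" "Suc n \<le> Ls (Suc t)"
        using decomp[of q] cardn[of n] unfolding q_def[symmetric] t_def[symmetric] by auto
      have tT: "T \<le> t"
      proof (rule ccontr)
        assume "\<not> T \<le> t"
        hence "Ls (Suc t) \<le> Ls T" using Lsmono by simp
        thus False using dq(3) n by simp
      qed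
      have Lpos: "real (Ls t) \<ge> 1"
      proof -
        have "(\<Sum>s<t. (1::nat)) \<le> (\<Sum>s<t. a s)" by (rule sum_mono) (use a1 in auto)
        hence "Ls t \<ge> t" unfolding Ls_def by simp
        thus ?thesis using tT unfolding T_def by simp
      qed
      have t0: "t \<ge> T0" using tT unfolding T_def by simp
      have h1: "(\<Sum>s<t. real (a s) / real (lev s + 1)) + M * a t \<le> (\<epsilon>/2) * (\<Sum>s<t. real (a s))"
        using T0 t0 by blast
      have h2: "(\<Sum>s<t. real (a s) / real (lev s + 1)) = (\<Sum>s<t. real (a s) / (real (lev s) + 1))"
        by (intro sum.cong refl) simp
      have h3: "real (Ls t) = (\<Sum>s<t. real (a s))" unfolding Ls_def by simp
      have "norm (S q) \<le> (\<epsilon>/2) * Ls t"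
        using dq(1) h1 unfolding h2 h3 by linarith
      also have "\<dots> \<le> (\<epsilon>/2) * Suc n" using dq(2) e by (intro mult_left_mono) auto
      finally have "norm (S q) / Suc n \<le> \<epsilon>/2" by (simp add: divide_le_eq mult.commute)
      hence "norm ((1 / real (Suc n)) *\<^sub>R (\<Sum>j\<le>n. eps j *\<^sub>R x (r j))) \<le> \<epsilon>/2"
        unfolding avg q_def by simp
      moreover have "\<epsilon>/2 < \<epsilon>" using e by simp
      ultimately show "norm ((1 / real (Suc n)) *\<^sub>R (\<Sum>j\<le>n. eps j *\<^sub>R x (r j)) - 0) < \<epsilon>"
        by (simp only: diff_zero)
    qed
  qed
  have epsig: "\<forall>j. eps j \<in> {-1,1::real}" unfolding eps_def using sig rU by blast
  have conv: "convergent (\<lambda>n. (1 / real (Suc n)) *\<^sub>R (\<Sum>j\<le>n. eps j *\<^sub>R x (r j)))"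
    using lim by (rule convergentI)
  show ?thesis
    by (rule exI[of _ r], rule exI[of _ eps]) (intro conjI rsm epsig conv)
qed



theorem proposition3p5:
  assumes "\<not> alternating_banach_saks TYPE('a::banach)"
    and "(e::real) > 0"
  shows "\<exists>f :: nat set \<Rightarrow> 'a. bi_lipschitz_GN f \<and> lip_f f * lip_finv f < 1 + e"
proof -
  obtain x :: "nat \<Rightarrow> 'a" where xb: "bounded (range x)" and
    nc: "\<not> (\<exists>r eps. strict_mono r \<and> (\<forall>j. eps j \<in> {-1, 1::real}) \<and>
           convergent (\<lambda>n. (1 / real (Suc n)) *\<^sub>R (\<Sum>j\<le>n. eps j *\<^sub>R x (r j))))"
    using assms(1) unfolding alternating_banach_saks_def by blast
  obtain M where M: "\<And>i. norm (x i) \<le> M" using xb unfolding bounded_iff by blast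
  show ?thesis
  proof (cases "\<exists>c>0. \<forall>n\<ge>1. good x n c")
    case True
    then obtain c where c: "c > 0" "\<And>n. n \<ge> 1 \<Longrightarrow> good x n c" by blast
    define \<tau> where "\<tau> = e / (6*(1+e))"
    have tau: "\<tau> > 0" unfolding \<tau>_def using assms(2) by simp
    have "3*\<tau>*(1+e) = e/2" unfolding \<tau>_def using assms(2) by (simp add: field_simps)
    hence tau2: "3*\<tau>*(1+e) < e" using assms(2) by simp
    obtain y :: "nat \<Rightarrow> 'a" and \<rho> where y: "\<forall>j. norm (y j) \<le> 1" "\<rho> \<ge> 1 - \<tau>"
      "\<forall>G s. finite G \<longrightarrow> (\<forall>j\<in>G. card G \<le> j) \<longrightarrow> (\<forall>j\<in>G. s j \<in> {-1,1}) \<longrightarrow> \<rho> * card G \<le> norm (\<Sum>j\<in>G. s j *\<^sub>R y j)"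
      using case2[OF M c(1) c(2) tau] by blast
    show ?thesis
      by (rule embed_lemma[of y \<rho> \<tau> e]) (use y tau tau2 assms(2) in auto)
  next
    case False
    hence "\<And>c. c > 0 \<Longrightarrow> \<exists>n\<ge>1. \<not> good x n c" by blast
    from case1[OF M this] nc show ?thesis by blast
  qed
qed


end
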